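(* Let $\alpha>1/\sqrt2$ be fixed. There is a constant $C$ depending only on $\alpha$ such that the following holds. Let $N\ge 2$ and $d\ge N-1$, and let $\mathcal{D}'$ be the distribution on $\mathbb{R}^{d+1}\times\{-1,+1\}$ defined in the context. Let $S_\infty$ be the $\ell_\infty$-perturbation set of radius $\epsilon=2\eta$ and $S_{\mathrm{RT}}$ the rotation-translation perturbation set with budget $N$. Then for every classifier $f:\mathbb{R}^{d+1}\to\{-1,+1\}$, $$\mathcal{R}^{\mathrm{avg}}_{\mathrm{adv}}(f;S_\infty,S_{\mathrm{RT}})\;\ge\;\tfrac12-\frac{C}{\sqrt N}.$$
   Context: The distribution $\mathcal{D}'$ over pairs $(\mathbf{x},y)$, $\mathbf{x}=(x_0,\dots,x_d)\in\mathbb{R}^{d+1}$: $y$ uniform on $\{-1,+1\}$; given $y$, $x_0\sim\mathcal{N}(y,\alpha^{-2})$ and $x_1,\dots,x_d$ i.i.d. $\mathcal{N}(y\eta,1)$, all independent, with $\eta=\alpha/\sqrt d$. The rotation-translation (RT) perturbation set with budget $M$ is $S_{\mathrm{RT}}(\mathbf{x})=\{\mathbf{x}_\pi:\pi$ a permutation of $\{0,\dots,d\}$ with $\pi(i)=i$ for all $i\ge M\}$, where $(\mathbf{x}_\pi)_i=x_{\pi(i)}$ (i.e. the coordinates with index $<M$ may be rearranged arbitrarily). The $\ell_p$-perturbation set of radius $\epsilon$ is $S(\mathbf{x})=\{\mathbf{x}+\mathbf{r}:\|\mathbf{r}\|_p\le\epsilon\}$. Adversarial risk: $\mathcal{R}_{\mathrm{adv}}(f;S)=\Pr_{(\mathbf{x},y)\sim\mathcal{D}'}[\exists\,\mathbf{x}'\in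 S(\mathbf{x}): f(\mathbf{x}')\neq y]$, and $\mathcal{R}^{\mathrm{avg}}_{\mathrm{adv}}(f;S_1,S_2)=\frac12(\mathcal{R}_{\mathrm{adv}}(f;S_1)+\mathcal{R}_{\mathrm{adv}}(f;S_2))$. *)

theory Defs
  imports "HOL-Probability.Probability"
begin

text \<open>Points of R^(d+1) are extensional functions on the index set {0..d}.\<close>

definition eta :: "real \<Rightarrow> nat \<Rightarrow> real" where
  "eta \<alpha> d = \<alpha> / sqrt (real d)"

definition cond_law :: "real \<Rightarrow> nat \<Rightarrow> real \<Rightarrow> (nat \<Rightarrow> real) measure" where
  "cond_law \<alpha> d y =
     PiM {0..d} (\<lambda>i. if i = 0 then density lborel (normal_density y (1 / \<alpha>))
                     else density lborel (normal_density (y * eta \<alpha> d) 1))"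

definition outer_prob :: "'a measure \<Rightarrow> 'a set \<Rightarrow> real" where
  "outer_prob M E = Inf {measure M A | A. A \<in> sets M \<and> E \<subseteq> A}"

definition S_linf :: "nat \<Rightarrow> real \<Rightarrow> (nat \<Rightarrow> real) \<Rightarrow> (nat \<Rightarrow> real) set" where
  "S_linf d \<epsilon> x = {(\<lambda>i. if i \<le> d then x i + r i else undefined) | r. (\<forall>i\<in>{0..d}. \<bar>r i\<bar> \<le> \<epsilon>)}"

definition S_RT :: "nat \<Rightarrow> nat \<Rightarrow> (nat \<Rightarrow> real) \<Rightarrow> (nat \<Rightarrow> real) set" where
  "S_RT d M x = {x \<circ> \<pi> | \<pi>. \<pi> permutes {0..d} \<and> (\<forall>i. M \<le> i \<longrightarrow> \<pi> i = i)}"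

definition adv_risk ::
  "real \<Rightarrow> nat \<Rightarrow> ((nat \<Rightarrow> real) \<Rightarrow> real) \<Rightarrow> ((nat \<Rightarrow> real) \<Rightarrow> (nat \<Rightarrow> real) set) \<Rightarrow> real" where
  "adv_risk \<alpha> d f S =
     (\<Sum>y\<in>{-1, 1::real}. (1/2) *
        outer_prob (cond_law \<alpha> d y)
          {x \<in> space (cond_law \<alpha> d y). \<exists>x'\<in>S x. f x' \<noteq> y})"

definition avg_adv_risk ::
  "real \<Rightarrow> nat \<Rightarrow> ((nat \<Rightarrow> real) \<Rightarrow> real) \<Rightarrow> ((nat \<Rightarrow> real) \<Rightarrow> (nat \<Rightarrow> real) set)
     \<Rightarrow> ((nat \<Rightarrow> real) \<Rightarrow> (nat \<Rightarrow> real) set) \<Rightarrow> real" where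
  "avg_adv_risk \<alpha> d f S1 S2 = (adv_risk \<alpha> d f S1 + adv_risk \<alpha> d f S2) / 2"

end

theory Submission
  imports Defs
begin

lemma gauss_sq:
  fixes a \<mu> m t :: real
  assumes a: "a > 1/2"
  defines "b \<equiv> a - 1/2"
  defines "c \<equiv> (2*a*\<mu> - m)/(2*b)"
  shows "normal_density \<mu> (1 / sqrt a) t ^ 2 / normal_density m 1 t
        = a / sqrt (2*b) * exp (b*c^2 - a*\<mu>^2 + m^2/2) * normal_density c (1/sqrt (2*b)) t"
proof -
  have b: "b > 0" using a b_def by simp
  have e: "-a*(t-\<mu>)^2 + (t-m)^2/2 = -b*(t-c)^2 + (b*c^2 - a*\<mu>^2 + m^2/2)"
  proof -
    have bc: "2*b*c = 2*a*\<mu> - m" using b unfolding c_def by simp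
    have "-b*(t-c)^2 + b*c^2 = -b*t^2 + (2*b*c)*t" by (simp add: power2_eq_square algebra_simps)
    also have "\<dots> = -b*t^2 + (2*a*\<mu> - m)*t" using bc by simp
    finally have "-b*(t-c)^2 + b*c^2 = -b*t^2 + (2*a*\<mu> - m)*t" .
    then show ?thesis unfolding b_def by (simp add: power2_eq_square algebra_simps) (simp add: field_simps; linarith)
  qed
  have n1: "normal_density \<mu> (1 / sqrt a) t = sqrt a / sqrt (2*pi) * exp (-a*(t-\<mu>)^2/2)"
    using a by (simp add: normal_density_def real_sqrt_divide real_sqrt_mult power_divide field_simps)
  have n2: "normal_density m 1 t = 1 / sqrt (2*pi) * exp (- ((t-m)^2) / 2)"
    by (simp add: normal_density_def)
  have n3: "normal_density c (1/sqrt (2*b)) t = sqrt b / sqrt pi * exp (-b*(t-c)^2)"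
    using b by (simp add: normal_density_def real_sqrt_divide real_sqrt_mult power_divide field_simps)
  have "normal_density \<mu> (1 / sqrt a) t ^ 2 / normal_density m 1 t
      = a / sqrt (2*pi) * exp (-a*(t-\<mu>)^2 + (t-m)^2/2)"
    using a unfolding n1 n2
    by (simp add: power_mult_distrib power_divide exp_diff[symmetric] exp_add[symmetric] field_simps
          flip: exp_of_nat_mult) 
  also have "\<dots> = a / sqrt (2*pi) * exp (-b*(t-c)^2) * exp (b*c^2 - a*\<mu>^2 + m^2/2)"
    unfolding e exp_add by simp
  also have "\<dots> = a / sqrt (2*b) * exp (b*c^2 - a*\<mu>^2 + m^2/2) * normal_density c (1/sqrt (2*b)) t"
    unfolding n3 using b by (simp add: real_sqrt_mult field_simps)
  finally show ?thesis .
qed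

definition Lr :: "real \<Rightarrow> real \<Rightarrow> real \<Rightarrow> real \<Rightarrow> real" where
  "Lr \<mu> s m t = normal_density \<mu> s t / normal_density m 1 t"

lemma Lr_meas[measurable]: "Lr \<mu> s m \<in> borel_measurable borel"
  unfolding Lr_def by measurable

lemma Lr_nonneg: "Lr \<mu> s m t \<ge> 0"
  unfolding Lr_def by simp

lemma int_Lr:
  assumes s: "s > 0"
  shows "integrable (density lborel (normal_density m 1)) (Lr \<mu> s m)"
  and "(\<integral>t. Lr \<mu> s m t \<partial>density lborel (normal_density m 1)) = 1"
proof -
  have eq: "normal_density m 1 t * Lr \<mu> s m t = normal_density \<mu> s t" for t
    using normal_density_pos[of 1 m t] by (simp add: Lr_def)
  show "integrable (density lborel (normal_density m 1)) (Lr \<mu> s m)"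
    by (subst integrable_density) (auto simp: eq s)
  show "(\<integral>t. Lr \<mu> s m t \<partial>density lborel (normal_density m 1)) = 1"
    by (subst integral_density) (auto simp: eq s)
qed

lemma int_Lr2:
  fixes a \<mu> m :: real
  assumes a: "a > 1/2"
  defines "b \<equiv> a - 1/2"
  defines "c \<equiv> (2*a*\<mu> - m)/(2*b)"
  shows "integrable (density lborel (normal_density m 1)) (\<lambda>t. (Lr \<mu> (1/sqrt a) m t)^2)"
        "(\<integral>t. (Lr \<mu> (1/sqrt a) m t)^2 \<partial>density lborel (normal_density m 1))
            = a / sqrt (2*b) * exp (b*c^2 - a*\<mu>^2 + m^2/2)"
proof -
  have eq: "normal_density m 1 t * (Lr \<mu> (1/sqrt a) m t)^2
      = a / sqrt (2*b) * exp (b*c^2 - a*\<mu>^2 + m^2/2) * normal_density c (1/sqrt (2*b)) t" for t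
    using normal_density_pos[of 1 m t] gauss_sq[OF a, where \<mu>=\<mu> and m=m and t=t]
    by (simp add: Lr_def b_def c_def power2_eq_square)
  have b: "b > 0" using a b_def by simp
  have ic: "integrable lborel (normal_density c (1/sqrt (2*b)))"
    by (rule integrable_normal_density) (use b in simp)
  have ib: "integrable lborel (\<lambda>t. a / sqrt (2*b) * exp (b*c^2 - a*\<mu>^2 + m^2/2) * normal_density c (1/sqrt (2*b)) t)"
    using b by (intro integrable_mult_right integrable_normal_density) simp
  show "integrable (density lborel (normal_density m 1)) (\<lambda>t. (Lr \<mu> (1/sqrt a) m t)^2)"
    by (subst integrable_density) (auto simp: eq ib ic simp del: times_divide_eq_left times_divide_eq_right)
  show "(\<integral>t. (Lr \<mu> (1/sqrt a) m t)^2 \<partial>density lborel (normal_density m 1))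
            = a / sqrt (2*b) * exp (b*c^2 - a*\<mu>^2 + m^2/2)"
  proof -
    have i1: "(\<integral>t. normal_density c (1/sqrt (2*b)) t \<partial>lborel) = 1"
      by (rule integral_normal_density) (use b in simp)
    have "(\<integral>t. (Lr \<mu> (1/sqrt a) m t)^2 \<partial>density lborel (normal_density m 1))
       = (\<integral>t. a / sqrt (2*b) * exp (b*c^2 - a*\<mu>^2 + m^2/2) * normal_density c (1/sqrt (2*b)) t \<partial>lborel)"
      by (subst integral_density) (auto simp: eq simp del: times_divide_eq_left times_divide_eq_right)
    also have "\<dots> = a / sqrt (2*b) * exp (b*c^2 - a*\<mu>^2 + m^2/2) * (\<integral>t. normal_density c (1/sqrt (2*b)) t \<partial>lborel)"
      by (rule integral_mult_right_zero)
    finally show ?thesis using i1 by simp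
  qed
qed

definition Nm :: "real \<Rightarrow> real measure" where
  "Nm m = density lborel (normal_density m 1)"

definition Ref :: "real \<Rightarrow> nat \<Rightarrow> (nat \<Rightarrow> real) measure" where
  "Ref m d = PiM {0..d} (\<lambda>i. Nm m)"

definition Plant :: "real \<Rightarrow> real \<Rightarrow> real \<Rightarrow> nat \<Rightarrow> (nat \<Rightarrow> real) measure" where
  "Plant \<mu> s m d = PiM {0..d} (\<lambda>i. if i = 0 then density lborel (normal_density \<mu> s) else Nm m)"

lemma prob_Nm: "prob_space (Nm m)"
  unfolding Nm_def by (rule prob_space_normal_density) simp

lemma sets_Nm[simp]: "sets (Nm m) = sets borel"
  unfolding Nm_def by simp

lemma space_Nm[simp]: "space (Nm m) = UNIV"
  unfolding Nm_def by simp

lemma prob_UNIV_Nm[simp]: "measure (Nm m) UNIV = 1"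
  using prob_space.prob_space[OF prob_Nm[of m]] by simp

lemma pps_Nm: "product_prob_space (\<lambda>i. Nm m)"
  by (rule product_prob_spaceI) (rule prob_Nm)

lemma prob_Ref: "prob_space (Ref m d)"
  unfolding Ref_def by (rule prob_space_PiM) (rule prob_Nm)

lemma space_Ref: "space (Ref m d) = PiE {0..d} (\<lambda>_. UNIV)"
  unfolding Ref_def by (simp add: space_PiM)

lemma Lr_meas_Nm[measurable]: "Lr \<mu> s m \<in> borel_measurable (Nm m')"
  by (simp add: measurable_cong_sets[OF sets_Nm refl])

lemma meas_comp_Ref:
  fixes g :: "real \<Rightarrow> 'b::topological_space"
  assumes "k \<in> {0..d}" "g \<in> borel_measurable borel"
  shows "(\<lambda>x. g (x k)) \<in> borel_measurable (PiM {0..d} (\<lambda>i. Nm m))"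
proof -
  have "g \<in> borel_measurable (Nm m)" using assms(2) by (simp add: measurable_cong_sets[OF sets_Nm refl])
  then show ?thesis
    by (rule measurable_compose[OF measurable_component_singleton[OF assms(1)]])
qed

lemma Plant_density:
  assumes s: "s > 0"
  shows "Plant \<mu> s m d = density (Ref m d) (\<lambda>x. ennreal (Lr \<mu> s m (x 0)))"
proof -
  define M where "M = (\<lambda>i::nat. if i = 0 then density lborel (normal_density \<mu> s) else Nm m)"
  interpret PM: product_prob_space M
    by (rule product_prob_spaceI) (auto simp: M_def prob_Nm prob_space_normal_density s)
  interpret PN: product_prob_space "\<lambda>i. Nm m" by (rule pps_Nm)
  have setsM[simp]: "sets (M i) = sets borel" for i by (simp add: M_def)
  have L0: "density (Nm m) (\<lambda>t. ennreal (Lr \<mu> s m t)) = density lborel (normal_density \<mu> s)"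
  proof -
    have "density (Nm m) (\<lambda>t. ennreal (Lr \<mu> s m t)) = density lborel (\<lambda>t. ennreal (normal_density m 1 t) * ennreal (Lr \<mu> s m t))"
      unfolding Nm_def by (rule density_density_eq) auto
    also have "\<dots> = density lborel (normal_density \<mu> s)"
    proof (rule arg_cong[where f="density lborel"], rule ext)
      fix t
      have "ennreal (normal_density m 1 t) * ennreal (Lr \<mu> s m t) = ennreal (normal_density m 1 t * Lr \<mu> s m t)"
        by (rule ennreal_mult''[symmetric]) (simp add: Lr_nonneg)
      also have "normal_density m 1 t * Lr \<mu> s m t = normal_density \<mu> s t"
        using normal_density_pos[of 1 m t] by (simp add: Lr_def)
      finally show "ennreal (normal_density m 1 t) * ennreal (Lr \<mu> s m t) = ennreal (normal_density \<mu> s t)" .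
    qed
    finally show ?thesis .
  qed
  have "density (Ref m d) (\<lambda>x. ennreal (Lr \<mu> s m (x 0))) = PiM {0..d} M"
  proof (rule PM.PiM_eqI)
    show "finite {0..d}" by simp
    show "sets (density (Ref m d) (\<lambda>x. ennreal (Lr \<mu> s m (x 0)))) = sets (PiM {0..d} M)"
      unfolding Ref_def by (auto intro!: sets_PiM_cong)
  next
    fix A assume A: "\<And>i. i \<in> {0..d} \<Longrightarrow> A i \<in> sets (M i)"
    define h where "h = (\<lambda>i t. (if i = 0 then ennreal (Lr \<mu> s m t) else 1) * indicator (A i) t)"
    have hm: "h i \<in> borel_measurable (Nm m)" if "i \<in> {0..d}" for i
      using A[OF that] unfolding h_def by (cases "i = 0") (simp_all add: measurable_cong_sets[OF sets_Nm refl])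
    have "emeasure (density (Ref m d) (\<lambda>x. ennreal (Lr \<mu> s m (x 0)))) (PiE {0..d} A)
        = (\<integral>\<^sup>+ x. ennreal (Lr \<mu> s m (x 0)) * indicator (PiE {0..d} A) x \<partial>Ref m d)"
      using A by (subst emeasure_density) (auto simp: Ref_def intro!: sets_PiM_I_finite meas_comp_Ref)
    also have "\<dots> = (\<integral>\<^sup>+ x. (\<Prod>i\<in>{0..d}. h i (x i)) \<partial>Ref m d)"
    proof (rule nn_integral_cong)
      fix x assume x: "x \<in> space (Ref m d)"
      have "(\<Prod>i\<in>{0..d}. h i (x i)) = ennreal (Lr \<mu> s m (x 0)) * (\<Prod>i\<in>{0..d}. indicator (A i) (x i))"
        unfolding h_def prod.distrib
        by (subst prod.remove[of _ 0]) (auto intro!: prod.neutral)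
      also have "(\<Prod>i\<in>{0..d}. indicator (A i) (x i) :: ennreal) = indicator (PiE {0..d} A) x"
        using x by (auto simp: space_Ref indicator_def PiE_iff)
      finally show "ennreal (Lr \<mu> s m (x 0)) * indicator (PiE {0..d} A) x = (\<Prod>i\<in>{0..d}. h i (x i))" by simp
    qed
    also have "\<dots> = (\<Prod>i\<in>{0..d}. integral\<^sup>N (Nm m) (h i))"
      unfolding Ref_def by (rule PN.product_nn_integral_prod) (auto intro: hm)
    also have "\<dots> = (\<Prod>i\<in>{0..d}. emeasure (M i) (A i))"
    proof (rule prod.cong[OF refl])
      fix i assume i: "i \<in> {0..d}"
      show "integral\<^sup>N (Nm m) (h i) = emeasure (M i) (A i)"
      proof (cases "i = 0")
        case True
        have "emeasure (M i) (A i) = emeasure (density (Nm m) (\<lambda>t. ennreal (Lr \<mu> s m t))) (A i)"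
          using True L0 by (simp add: M_def)
        also have "\<dots> = integral\<^sup>N (Nm m) (h i)"
          using A[OF i] True by (subst emeasure_density) (auto simp: h_def M_def Lr_meas_Nm)
        finally show ?thesis by simp
      next
        case False
        then show ?thesis using A[OF i]
          by (simp add: h_def M_def nn_integral_indicator)
      qed
    qed
    finally show "emeasure (density (Ref m d) (\<lambda>x. ennreal (Lr \<mu> s m (x 0)))) (PiE {0..d} A) = (\<Prod>i\<in>{0..d}. emeasure (M i) (A i))" .
  qed
  then show ?thesis unfolding Plant_def M_def by simp
qed

lemma Ref_single:
  fixes f :: "real \<Rightarrow> real"
  assumes k: "k \<in> {0..d}" and f: "integrable (Nm m) f"
  shows "integrable (Ref m d) (\<lambda>x. f (x k))" "(\<integral>x. f (x k) \<partial>Ref m d) = (\<integral>t. f t \<partial>Nm m)"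
proof -
  interpret PN: product_prob_space "\<lambda>i. Nm m" by (rule pps_Nm)
  interpret NM: prob_space "Nm m" by (rule prob_Nm)
  define F where "F = (\<lambda>i t. if i = k then f t else 1)"
  have Fi: "integrable (Nm m) (F i)" for i using f by (cases "i = k") (simp_all add: F_def)
  have eq: "(\<Prod>i\<in>{0..d}. F i (x i)) = f (x k)" for x
    using k by (simp add: F_def prod.delta[where b="\<lambda>i. f (x i)"] if_distrib cong: if_cong)
  show "integrable (Ref m d) (\<lambda>x. f (x k))"
    using PN.product_integrable_prod[of "{0..d}" F] Fi unfolding Ref_def eq by simp
  have "(\<integral>x. f (x k) \<partial>Ref m d) = (\<Prod>i\<in>{0..d}. integral\<^sup>L (Nm m) (F i))"
    using PN.product_integral_prod[of "{0..d}" F] Fi unfolding Ref_def eq by simp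
  also have "\<dots> = (\<Prod>i\<in>{0..d}. (if i = k then (\<integral>t. f t \<partial>Nm m) else 1))"
    using prob_space.prob_space[OF prob_Nm] by (intro prod.cong) (auto simp: F_def)
  also have "\<dots> = (\<integral>t. f t \<partial>Nm m)"
    using k by (simp add: prod.delta)
  finally show "(\<integral>x. f (x k) \<partial>Ref m d) = (\<integral>t. f t \<partial>Nm m)" .
qed

lemma Ref_pair:
  fixes f h :: "real \<Rightarrow> real"
  assumes k: "k \<in> {0..d}" and l: "l \<in> {0..d}" and kl: "k \<noteq> l"
    and f: "integrable (Nm m) f" and h: "integrable (Nm m) h"
  shows "integrable (Ref m d) (\<lambda>x. f (x k) * h (x l))"
        "(\<integral>x. f (x k) * h (x l) \<partial>Ref m d) = (\<integral>t. f t \<partial>Nm m) * (\<integral>t. h t \<partial>Nm m)"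
proof -
  interpret PN: product_prob_space "\<lambda>i. Nm m" by (rule pps_Nm)
  interpret NM: prob_space "Nm m" by (rule prob_Nm)
  define F where "F = (\<lambda>i t. if i = k then f t else if i = l then h t else 1)"
  have Fi: "integrable (Nm m) (F i)" for i using f h by (cases "i = k"; cases "i = l") (simp_all add: F_def)
  have eq: "(\<Prod>i\<in>{0..d}. F i (x i)) = f (x k) * h (x l)" for x
  proof -
    have "(\<Prod>i\<in>{0..d}. F i (x i)) = (\<Prod>i\<in>{0..d}. (if i = k then f (x i) else 1) * (if i = l then h (x i) else 1))"
      using kl by (intro prod.cong) (auto simp: F_def)
    also have "\<dots> = f (x k) * h (x l)"
      using k l by (simp add: prod.distrib prod.delta)
    finally show ?thesis .
  qed
  show "integrable (Ref m d) (\<lambda>x. f (x k) * h (x l))"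
    using PN.product_integrable_prod[of "{0..d}" F] Fi unfolding Ref_def eq by simp
  have "(\<integral>x. f (x k) * h (x l) \<partial>Ref m d) = (\<Prod>i\<in>{0..d}. integral\<^sup>L (Nm m) (F i))"
    using PN.product_integral_prod[of "{0..d}" F] Fi unfolding Ref_def eq by simp
  also have "\<dots> = (\<Prod>i\<in>{0..d}. (if i = k then (\<integral>t. f t \<partial>Nm m) else 1) * (if i = l then (\<integral>t. h t \<partial>Nm m) else 1))"
    using kl prob_space.prob_space[OF prob_Nm] by (intro prod.cong) (auto simp: F_def)
  also have "\<dots> = (\<integral>t. f t \<partial>Nm m) * (\<integral>t. h t \<partial>Nm m)"
    using k l by (simp add: prod.distrib prod.delta)
  finally show "(\<integral>x. f (x k) * h (x l) \<partial>Ref m d) = (\<integral>t. f t \<partial>Nm m) * (\<integral>t. h t \<partial>Nm m)" .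
qed

lemma Ref_swap:
  fixes h :: "(nat \<Rightarrow> real) \<Rightarrow> real"
  assumes k: "k \<in> {0..d}" and hm: "h \<in> borel_measurable (Ref m d)"
  shows "(\<integral>x. h x \<partial>Ref m d) = (\<integral>x. h (x \<circ> Transposition.transpose 0 k) \<partial>Ref m d)"
proof -
  let ?t = "\<lambda>\<omega>. \<lambda>n\<in>{0..d}. \<omega> (Transposition.transpose 0 k n)"
  have inj: "inj_on (Transposition.transpose 0 k) {0..d}" by (auto simp: inj_on_def Transposition.transpose_def split: if_splits)
  have into: "Transposition.transpose 0 k \<in> {0..d} \<rightarrow> {0..d}" using k by (auto simp: Transposition.transpose_def)
  have D: "distr (Ref m d) (Ref m d) ?t = Ref m d"
    using distr_PiM_reindex[OF _ inj into, of "\<lambda>i. Nm m"] prob_Nm unfolding Ref_def by simp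
  have tm: "?t \<in> measurable (Ref m d) (Ref m d)"
    using into unfolding Ref_def by (intro measurable_restrict) (auto intro!: measurable_component_singleton)
  have "(\<integral>x. h x \<partial>Ref m d) = (\<integral>x. h x \<partial>distr (Ref m d) (Ref m d) ?t)" using D by simp
  also have "\<dots> = (\<integral>x. h (?t x) \<partial>Ref m d)"
    by (rule integral_distr[OF tm hm])
  also have "\<dots> = (\<integral>x. h (x \<circ> Transposition.transpose 0 k) \<partial>Ref m d)"
  proof -
    have pt: "?t x = x \<circ> Transposition.transpose 0 k" if x: "x \<in> space (Ref m d)" for x
    proof
      fix n show "?t x n = (x \<circ> Transposition.transpose 0 k) n"
        using x k by (cases "n \<in> {0..d}") (auto simp: space_Ref PiE_iff extensional_def Transposition.transpose_def)
    qed
    show ?thesis by (rule Bochner_Integration.integral_cong) (simp_all add: pt)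
  qed
  finally show ?thesis .
qed

lemma planted_bound:
  fixes \<mu> s m :: real and d N :: nat and S :: "(nat \<Rightarrow> real) set"
  assumes s: "s > 0" and N1: "1 \<le> N" and Nd: "N \<le> d+1"
    and S: "S \<in> sets (Ref m d)"
    and sym: "\<And>k x. k < N \<Longrightarrow> x \<in> space (Ref m d) \<Longrightarrow> (x \<circ> Transposition.transpose 0 k \<in> S \<longleftrightarrow> x \<in> S)"
    and L2: "integrable (Nm m) (\<lambda>t. (Lr \<mu> s m t)^2)"
  shows "\<bar>measure (Plant \<mu> s m d) S - measure (Ref m d) S\<bar>
           \<le> sqrt (((\<integral>t. (Lr \<mu> s m t)^2 \<partial>Nm m) - 1) / N)"
proof -
  interpret R: prob_space "Ref m d" by (rule prob_Ref)
  interpret NM: prob_space "Nm m" by (rule prob_Nm)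
  define L where "L = Lr \<mu> s m"
  define K where "K = (\<integral>t. (L t)^2 \<partial>Nm m)"
  define g where "g = (\<lambda>t. L t - 1)"
  define G where "G = (\<lambda>x. (\<Sum>k<N. g (x k)) / N)"
  have Lm[measurable]: "L \<in> borel_measurable borel" unfolding L_def by measurable
  have Lint: "integrable (Nm m) L" and L1: "(\<integral>t. L t \<partial>Nm m) = 1"
    using int_Lr[OF s, of m \<mu>] unfolding L_def Nm_def by auto
  have L2': "integrable (Nm m) (\<lambda>t. (L t)^2)" using L2 unfolding L_def .
  have gint: "integrable (Nm m) g" and g0: "(\<integral>t. g t \<partial>Nm m) = 0"
    using Lint L1 by (auto simp: g_def)
  have g2eq: "(\<lambda>t. (g t)^2) = (\<lambda>t. (L t)^2 - 2 * L t + 1)"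
    by (auto simp: g_def power2_eq_square algebra_simps)
  have g2int: "integrable (Nm m) (\<lambda>t. (g t)^2)"
    unfolding g2eq using L2' Lint by auto
  have g2: "(\<integral>t. (g t)^2 \<partial>Nm m) = K - 1"
    unfolding g2eq K_def using L2' Lint L1 by simp
  have kI: "k \<in> {0..d}" if "k < N" for k using that Nd by auto
  have Sm: "indicator S \<in> borel_measurable (Ref m d)" using S by simp
  have LkI: "integrable (Ref m d) (\<lambda>x. L (x k))" if "k < N" for k
    using Ref_single[OF kI[OF that] Lint] by simp
  have gkI: "integrable (Ref m d) (\<lambda>x. g (x k))" if "k < N" for k
    using Ref_single[OF kI[OF that] gint] by simp
  have Lkm: "(\<lambda>x. L (x k)) \<in> borel_measurable (Ref m d)" if "k \<in> {0..d}" for k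
    using meas_comp_Ref[OF that Lm] unfolding Ref_def .
  have a: "measure (Plant \<mu> s m d) S = (\<integral>x. L (x 0) * indicator S x \<partial>Ref m d)"
  proof -
    have "measure (Plant \<mu> s m d) S = (\<integral>x. indicator S x \<partial>density (Ref m d) (\<lambda>x. L (x 0)))"
      using S sets.sets_into_space[OF S] unfolding Plant_density[OF s] L_def
      by (simp add: Int_absorb2)
    also have "\<dots> = (\<integral>x. L (x 0) * indicator S x \<partial>Ref m d)"
      using Lkm[of 0] Sm by (subst integral_density) (auto simp: L_def Lr_nonneg)
    finally show ?thesis .
  qed
  have b: "(\<integral>x. L (x 0) * indicator S x \<partial>Ref m d) = (\<integral>x. L (x k) * indicator S x \<partial>Ref m d)"
    if k: "k < N" for k
  proof -
    have "(\<integral>x. L (x 0) * indicator S x \<partial>Ref m d)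
        = (\<integral>x. L ((x \<circ> Transposition.transpose 0 k) 0) * indicator S (x \<circ> Transposition.transpose 0 k) \<partial>Ref m d)"
      using Lkm[of 0] Sm by (intro Ref_swap[OF kI[OF k]] borel_measurable_times) auto
    also have "\<dots> = (\<integral>x. L (x k) * indicator S x \<partial>Ref m d)"
      using sym[OF k] by (intro Bochner_Integration.integral_cong) (auto simp: indicator_def)
    finally show ?thesis .
  qed
  have c: "measure (Plant \<mu> s m d) S - measure (Ref m d) S = (\<integral>x. G x * indicator S x \<partial>Ref m d)"
  proof -
    have RS: "measure (Ref m d) S = (\<integral>x. indicator S x \<partial>Ref m d)"
      using sets.sets_into_space[OF S] by (simp add: Int_absorb2)
    have i1: "integrable (Ref m d) (\<lambda>x. L (x k) * indicator S x)" if "k < N" for k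
      using LkI[OF that] S by (simp add: integrable_real_mult_indicator)
    have i2: "integrable (Ref m d) (indicator S :: _ \<Rightarrow> real)"
      using S by (intro integrable_real_indicator) (auto simp: R.emeasure_finite less_top[symmetric])
    have each: "(\<integral>x. (L (x k) * indicator S x - indicator S x) / N \<partial>Ref m d)
        = (measure (Plant \<mu> s m d) S - measure (Ref m d) S) / N" if k: "k < N" for k
    proof -
      have "(\<integral>x. (L (x k) * indicator S x - indicator S x) / N \<partial>Ref m d)
          = ((\<integral>x. L (x k) * indicator S x \<partial>Ref m d) - (\<integral>x. indicator S x \<partial>Ref m d)) / N"
        using Bochner_Integration.integral_diff[OF i1[OF k] i2] by (simp only: integral_divide_zero)
      also have "(\<integral>x. L (x k) * indicator S x \<partial>Ref m d) = measure (Plant \<mu> s m d) S"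
        using a b[OF k] by simp
      finally show ?thesis using RS by simp
    qed
    have "(\<integral>x. G x * indicator S x \<partial>Ref m d)
        = (\<integral>x. (\<Sum>k<N. (L (x k) * indicator S x - indicator S x) / N) \<partial>Ref m d)"
      by (intro Bochner_Integration.integral_cong refl)
         (simp add: G_def g_def sum_distrib_right sum_divide_distrib left_diff_distrib)
    also have "\<dots> = (\<Sum>k<N. (\<integral>x. (L (x k) * indicator S x - indicator S x) / N \<partial>Ref m d))"
      using i1 i2 by (intro Bochner_Integration.integral_sum) auto
    also have "\<dots> = (\<Sum>k<N. (measure (Plant \<mu> s m d) S - measure (Ref m d) S) / N)"
      by (rule sum.cong[OF refl]) (rule each, simp)
    also have "\<dots> = measure (Plant \<mu> s m d) S - measure (Ref m d) S"
      using N1 by simp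
    finally show ?thesis by simp
  qed
  have GI: "integrable (Ref m d) G"
  proof -
    have "integrable (Ref m d) (\<lambda>x. \<Sum>k<N. g (x k))" by (rule Bochner_Integration.integrable_sum) (simp add: gkI)
    then show ?thesis unfolding G_def by simp
  qed
  have G2eq: "(\<lambda>x. (G x)^2) = (\<lambda>x. (\<Sum>k<N. \<Sum>l<N. g (x k) * g (x l)) / (real N)^2)"
    unfolding G_def power_divide by (simp only: power2_eq_square sum_product)
  have pairI: "integrable (Ref m d) (\<lambda>x. g (x k) * g (x l))" if "k < N" "l < N" for k l
  proof (cases "k = l")
    case True
    then show ?thesis using Ref_single[OF kI[OF that(1)] g2int] by (simp add: power2_eq_square)
  next
    case False
    then show ?thesis using Ref_pair[OF kI[OF that(1)] kI[OF that(2)] False gint gint] by simp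
  qed
  have pairV: "(\<integral>x. g (x k) * g (x l) \<partial>Ref m d) = (if k = l then K - 1 else 0)" if "k < N" "l < N" for k l
  proof (cases "k = l")
    case True
    then show ?thesis using Ref_single[OF kI[OF that(1)] g2int] g2 by (simp add: power2_eq_square)
  next
    case False
    then show ?thesis using Ref_pair[OF kI[OF that(1)] kI[OF that(2)] False gint gint] g0 by simp
  qed
  have G2I: "integrable (Ref m d) (\<lambda>x. (G x)^2)"
  proof -
    have "integrable (Ref m d) (\<lambda>x. \<Sum>k<N. \<Sum>l<N. g (x k) * g (x l))"
      by (intro Bochner_Integration.integrable_sum) (auto intro: pairI)
    then show ?thesis unfolding G2eq by simp
  qed
  have G2: "(\<integral>x. (G x)^2 \<partial>Ref m d) = (K - 1) / N"
  proof -
    have "(\<integral>x. (G x)^2 \<partial>Ref m d) = (\<Sum>k<N. \<Sum>l<N. (\<integral>x. g (x k) * g (x l) \<partial>Ref m d)) / (real N)^2"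
    proof -
      have inner: "(\<integral>x. (\<Sum>l<N. g (x k) * g (x l)) \<partial>Ref m d) = (\<Sum>l<N. (\<integral>x. g (x k) * g (x l) \<partial>Ref m d))"
        if "k < N" for k
        using that by (intro Bochner_Integration.integral_sum) (auto intro: pairI)
      have "(\<integral>x. (\<Sum>k<N. \<Sum>l<N. g (x k) * g (x l)) \<partial>Ref m d) = (\<Sum>k<N. (\<integral>x. (\<Sum>l<N. g (x k) * g (x l)) \<partial>Ref m d))"
        by (intro Bochner_Integration.integral_sum Bochner_Integration.integrable_sum) (auto intro: pairI)
      also have "\<dots> = (\<Sum>k<N. \<Sum>l<N. (\<integral>x. g (x k) * g (x l) \<partial>Ref m d))"
        by (rule sum.cong[OF refl]) (rule inner, simp)
      finally show ?thesis unfolding G2eq by simp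
    qed
    also have "\<dots> = (\<Sum>k<N. K - 1) / (real N)^2"
      by (simp add: pairV)
    also have "\<dots> = (K - 1) / N"
      using N1 by (simp add: power2_eq_square)
    finally show ?thesis .
  qed
  have "\<bar>\<integral>x. G x * indicator S x \<partial>Ref m d\<bar> \<le> (\<integral>x. \<bar>G x * indicator S x\<bar> \<partial>Ref m d)"
    using integral_norm_bound[of "Ref m d" "\<lambda>x. G x * indicator S x"] by simp
  also have "\<dots> \<le> (\<integral>x. \<bar>G x\<bar> \<partial>Ref m d)"
  proof (rule integral_mono)
    show "integrable (Ref m d) (\<lambda>x. \<bar>G x * indicator S x\<bar>)"
      using integrable_abs[OF integrable_real_mult_indicator[OF S GI]] .
    show "integrable (Ref m d) (\<lambda>x. \<bar>G x\<bar>)" using GI by simp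
    show "\<And>x. x \<in> space (Ref m d) \<Longrightarrow> \<bar>G x * indicator S x\<bar> \<le> \<bar>G x\<bar>"
      by (simp add: indicator_def)
  qed
  also have "\<dots> \<le> sqrt ((K - 1) / N)"
  proof (rule real_le_rsqrt)
    have v: "R.variance (\<lambda>x. \<bar>G x\<bar>) = (\<integral>x. (\<bar>G x\<bar>)^2 \<partial>Ref m d) - (\<integral>x. \<bar>G x\<bar> \<partial>Ref m d)^2"
      using GI G2I by (intro R.variance_eq) auto
    have "R.variance (\<lambda>x. \<bar>G x\<bar>) \<ge> 0" by (intro Bochner_Integration.integral_nonneg) simp
    then show "(\<integral>x. \<bar>G x\<bar> \<partial>Ref m d)^2 \<le> (K - 1) / N"
      using v G2 by simp
  qed
  finally show ?thesis using c unfolding K_def L_def by simp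
qed

lemma normal_shift:
  assumes "\<sigma> > 0"
  shows "distr (density lborel (normal_density \<mu> \<sigma>)) (Nm m') ((+) c) = density lborel (normal_density (c+\<mu>) \<sigma>)"
proof -
  have "density lborel (normal_density (c+\<mu>) \<sigma>) = density (distr lborel borel ((+) c)) (normal_density (c+\<mu>) \<sigma>)"
    by (simp add: lborel_distr_plus)
  also have "\<dots> = distr (density lborel (\<lambda>x. normal_density (c+\<mu>) \<sigma> (c + x))) borel ((+) c)"
    by (rule density_distr) auto
  also have "(\<lambda>x. normal_density (c+\<mu>) \<sigma> (c + x)) = normal_density \<mu> \<sigma>"
    by (auto simp: normal_density_def fun_eq_iff)
  also have "distr (density lborel (normal_density \<mu> \<sigma>)) borel ((+) c) = distr (density lborel (normal_density \<mu> \<sigma>)) (Nm m') ((+) c)"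
    by (rule distr_cong) auto
  finally show ?thesis by simp
qed

lemma Nm_shift: "distr (Nm m) (Nm m') ((+) c) = Nm (c+m)"
  using normal_shift[of 1 m m' c] unfolding Nm_def[symmetric] by simp

lemma plus_meas:
  assumes "sets A = sets borel" "sets B = sets borel"
  shows "((+) (c::real)) \<in> measurable A B"
  unfolding measurable_cong_sets[OF assms] by measurable

lemma Plant_shift:
  assumes s: "s > 0"
  shows "distr (Plant \<mu> s m d) (Ref m' d) (compose {0..d} ((+) c)) = Plant (c+\<mu>) s (c+m) d"
proof -
  define M where "M = (\<lambda>i::nat. if i = 0 then density lborel (normal_density \<mu> s) else Nm m)"
  have "distr (PiM {0..d} M) (PiM {0..d} (\<lambda>i. Nm m')) (compose {0..d} ((+) c))
      = PiM {0..d} (\<lambda>i. distr (M i) (Nm m') ((+) c))"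
    by (rule distr_PiM_finite_prob_space') (auto simp: M_def prob_Nm prob_space_normal_density s intro!: plus_meas)
  also have "\<dots> = Plant (c+\<mu>) s (c+m) d"
    unfolding Plant_def
    by (rule PiM_cong) (auto simp: M_def normal_shift s Nm_shift)
  finally show ?thesis unfolding Plant_def Ref_def M_def .
qed

lemma outer_sum:
  fixes M M' :: "'a measure"
  assumes E: "E \<subseteq> space M" and E': "E' \<subseteq> space M'"
    and H: "\<And>A A'. A \<in> sets M \<Longrightarrow> A' \<in> sets M' \<Longrightarrow> E \<subseteq> A \<Longrightarrow> E' \<subseteq> A' \<Longrightarrow> c \<le> measure M A + measure M' A'"
  shows "c \<le> outer_prob M E + outer_prob M' E'"
proof -
  let ?X = "{measure M A | A. A \<in> sets M \<and> E \<subseteq> A}"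
  let ?Y = "{measure M' A | A. A \<in> sets M' \<and> E' \<subseteq> A}"
  have X: "?X \<noteq> {}" using E by blast
  have Y: "?Y \<noteq> {}" using E' by blast
  have "c - Inf ?Y \<le> Inf ?X"
  proof (rule cInf_greatest[OF X])
    fix u assume "u \<in> ?X"
    then obtain A where A: "A \<in> sets M" "E \<subseteq> A" "u = measure M A" by blast
    have "c - u \<le> Inf ?Y"
    proof (rule cInf_greatest[OF Y])
      fix v assume "v \<in> ?Y"
      then obtain A' where "A' \<in> sets M'" "E' \<subseteq> A'" "v = measure M' A'" by blast
      then show "c - u \<le> v" using H[OF A(1) _ A(2)] A(3) by force
    qed
    then show "c - Inf ?Y \<le> u" by simp
  qed
  then show ?thesis unfolding outer_prob_def by simp
qed

definition Kb :: "real \<Rightarrow> real" where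
  "Kb \<alpha> = \<alpha>^2 / sqrt (2*(\<alpha>^2 - 1/2)) * exp ((2*\<alpha>^2*(1+2*\<alpha>)+\<alpha>)^2 / (4*(\<alpha>^2 - 1/2)) + \<alpha>^2/2)"

lemma alpha_facts:
  fixes \<alpha> :: real
  assumes \<alpha>: "\<alpha> > 1/sqrt 2"
  shows "\<alpha> > 0" "\<alpha>^2 > 1/2"
proof -
  have p: "1/sqrt 2 > (0::real)" by simp
  then show "\<alpha> > 0" using \<alpha> by linarith
  have "(1/sqrt 2)^2 < \<alpha>^2" using \<alpha> p by (intro power_strict_mono) auto
  then show "\<alpha>^2 > 1/2" by (simp add: power_divide)
qed

lemma K_bound:
  fixes \<alpha> \<mu> m :: real
  assumes \<alpha>: "\<alpha> > 1/sqrt 2" and \<mu>: "\<bar>\<mu>\<bar> \<le> 1 + 2*\<alpha>" and m: "\<bar>m\<bar> \<le> \<alpha>"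
  shows "integrable (Nm m) (\<lambda>t. (Lr \<mu> (1/\<alpha>) m t)^2)"
        "(\<integral>t. (Lr \<mu> (1/\<alpha>) m t)^2 \<partial>Nm m) \<le> Kb \<alpha>"
proof -
  note af = alpha_facts[OF \<alpha>]
  define a where "a = \<alpha>^2"
  define b where "b = a - 1/2"
  define c where "c = (2*a*\<mu> - m)/(2*b)"
  have a: "a > 1/2" using af a_def by simp
  have b: "b > 0" using a b_def by simp
  have sa: "1 / sqrt a = 1/\<alpha>" using af by (simp add: a_def)
  note I = int_Lr2[OF a, where \<mu>=\<mu> and m=m, folded Nm_def, unfolded sa]
  show "integrable (Nm m) (\<lambda>t. (Lr \<mu> (1/\<alpha>) m t)^2)" using I(1) .
  have e1: "b*c^2 = (2*a*\<mu> - m)^2 / (4*b)"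
  proof -
    have "b*c^2 = b * (2*a*\<mu> - m)^2 / (2*b)^2" unfolding c_def by (simp add: power_divide)
    also have "\<dots> = (2*a*\<mu> - m)^2 / (4*b)" using b by (simp add: power2_eq_square)
    finally show ?thesis .
  qed
  have "\<bar>2*a*\<mu> - m\<bar> \<le> 2*a*\<bar>\<mu>\<bar> + \<bar>m\<bar>"
    using abs_triangle_ineq4[of "2*a*\<mu>" m] a by (simp add: abs_mult)
  also have "\<dots> \<le> 2*a*(1+2*\<alpha>) + \<alpha>"
    using a \<mu> m by (intro add_mono mult_left_mono) auto
  finally have "\<bar>2*a*\<mu> - m\<bar> \<le> 2*a*(1+2*\<alpha>) + \<alpha>" .
  then have sq: "(2*a*\<mu> - m)^2 \<le> (2*a*(1+2*\<alpha>) + \<alpha>)^2"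
    using power_mono[of "\<bar>2*a*\<mu> - m\<bar>" "2*a*(1+2*\<alpha>) + \<alpha>" 2] by simp
  have m2: "m^2 \<le> \<alpha>^2"
    using power_mono[of "\<bar>m\<bar>" \<alpha> 2] m by simp
  have "b*c^2 - a*\<mu>^2 + m^2/2 \<le> (2*a*(1+2*\<alpha>) + \<alpha>)^2 / (4*b) + \<alpha>^2/2"
  proof -
    have "b*c^2 \<le> (2*a*(1+2*\<alpha>) + \<alpha>)^2 / (4*b)"
      unfolding e1 using b sq by (intro divide_right_mono) auto
    moreover have "a*\<mu>^2 \<ge> 0" using a by simp
    ultimately show ?thesis using m2 by linarith
  qed
  then have "exp (b*c^2 - a*\<mu>^2 + m^2/2) \<le> exp ((2*a*(1+2*\<alpha>) + \<alpha>)^2 / (4*b) + \<alpha>^2/2)"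
    by simp
  then have "a / sqrt (2*b) * exp (b*c^2 - a*\<mu>^2 + m^2/2) \<le> a / sqrt (2*b) * exp ((2*a*(1+2*\<alpha>) + \<alpha>)^2 / (4*b) + \<alpha>^2/2)"
    using a b by (intro mult_left_mono) auto
  then show "(\<integral>t. (Lr \<mu> (1/\<alpha>) m t)^2 \<partial>Nm m) \<le> Kb \<alpha>"
    using I(2) unfolding Kb_def b_def c_def a_def by simp
qed

lemma space_Plant: "space (Plant \<mu> s m d) = PiE {0..d} (\<lambda>_. UNIV)"
  unfolding Plant_def space_PiM by (intro PiE_cong) auto

lemma sets_Plant: "sets (Plant \<mu> s m d) = sets (Ref m' d)"
  unfolding Plant_def Ref_def by (rule sets_PiM_cong) auto

lemma cond_law_Plant: "cond_law \<alpha> d y = Plant y (1/\<alpha>) (y * eta \<alpha> d) d"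
  unfolding cond_law_def Plant_def Nm_def by simp

lemma perm_space:
  assumes "\<pi> permutes {0..d}" "x \<in> PiE {0..d} (\<lambda>_. UNIV :: real set)"
  shows "x \<circ> \<pi> \<in> PiE {0..d} (\<lambda>_. UNIV :: real set)"
  using assms by (auto simp: PiE_iff extensional_def permutes_not_in)

lemma perm_meas:
  assumes p: "\<pi> permutes {0..d}"
  shows "(\<lambda>x. x \<circ> \<pi>) \<in> measurable (Ref m d) (Ref m d)"
proof -
  have "(\<lambda>x i. x (\<pi> i)) \<in> measurable (Ref m d) (Ref m d)"
    unfolding Ref_def
  proof (rule measurable_PiM_single')
    fix i assume "i \<in> {0..d}"
    then have "\<pi> i \<in> {0..d}" using p by (metis permutes_in_image)
    then show "(\<lambda>x. x (\<pi> i)) \<in> measurable (PiM {0..d} (\<lambda>i. Nm m)) (Nm m)"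
      by (rule measurable_component_singleton)
  next
    show "(\<lambda>x i. x (\<pi> i)) \<in> space (PiM {0..d} (\<lambda>i. Nm m)) \<rightarrow> PiE {0..d} (\<lambda>i. space (Nm m))"
      using perm_space[OF p] by (auto simp: space_PiM o_def)
  qed
  then show ?thesis by (simp add: o_def)
qed

lemma key_pair:
  fixes \<alpha> \<delta> :: real and d N :: nat and f :: "(nat \<Rightarrow> real) \<Rightarrow> real" and y :: real
  assumes \<alpha>: "\<alpha> > 1/sqrt 2" and N1: "1 \<le> N" and Nd: "N \<le> d+1" and d1: "1 \<le> d"
    and y: "y \<in> {-1,1}" and f: "\<forall>x. f x \<in> {-1,1}"
    and \<delta>: "\<And>\<mu>. \<bar>\<mu>\<bar> \<le> 1 + 2*\<alpha> \<Longrightarrow>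
        sqrt (((\<integral>t. (Lr \<mu> (1/\<alpha>) (-y*eta \<alpha> d) t)^2 \<partial>Nm (-y*eta \<alpha> d)) - 1) / N) \<le> \<delta>"
    and \<delta>I: "\<And>\<mu>. \<bar>\<mu>\<bar> \<le> 1 + 2*\<alpha> \<Longrightarrow>
        integrable (Nm (-y*eta \<alpha> d)) (\<lambda>t. (Lr \<mu> (1/\<alpha>) (-y*eta \<alpha> d) t)^2)"
  shows "1 - 2*\<delta> \<le> outer_prob (cond_law \<alpha> d y) {x \<in> space (cond_law \<alpha> d y). \<exists>x'\<in>S_linf d (2*eta \<alpha> d) x. f x' \<noteq> y}
                 + outer_prob (cond_law \<alpha> d (-y)) {x \<in> space (cond_law \<alpha> d (-y)). \<exists>x'\<in>S_RT d N x. f x' \<noteq> -y}"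
proof -
  note af = alpha_facts[OF \<alpha>]
  define \<eta> where "\<eta> = eta \<alpha> d"
  define s where "s = 1/\<alpha>"
  define mm where "mm = -y*\<eta>"
  define c where "c = -2*y*\<eta>"
  have s0: "s > 0" using af by (simp add: s_def)
  have sd: "sqrt (real d) \<ge> 1" using d1 by simp
  have \<eta>0: "\<eta> \<ge> 0" using af by (simp add: \<eta>_def eta_def)
  have \<eta>\<alpha>: "\<eta> \<le> \<alpha>"
  proof -
    have "\<alpha> / sqrt (real d) \<le> \<alpha> / 1" using af sd by (intro divide_left_mono) auto
    then show ?thesis by (simp add: \<eta>_def eta_def)
  qed
  have yabs: "\<bar>y\<bar> = 1" and yne: "y \<noteq> -y" using y by auto
  define P where "P = cond_law \<alpha> d y"
  define P' where "P' = cond_law \<alpha> d (-y)"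
  define R where "R = Ref mm d"
  define Q where "Q = Plant (c+y) s mm d"
  define T where "T = compose {0..d} ((+) c)"
  have P_eq: "P = Plant y s (y*\<eta>) d" unfolding P_def s_def \<eta>_def by (rule cond_law_Plant)
  have P'_eq: "P' = Plant (-y) s mm d" unfolding P'_def s_def \<eta>_def mm_def by (simp add: cond_law_Plant)
  have QD: "distr P R T = Q"
    unfolding P_eq R_def T_def Q_def using Plant_shift[OF s0, of y "y*\<eta>" d mm c]
    by (simp add: c_def mm_def algebra_simps)
  define U where "U = PiE {0..d} (\<lambda>_. UNIV :: real set)"
  have spP: "space P = U" unfolding P_eq U_def by (rule space_Plant)
  have spP': "space P' = U" unfolding P'_eq U_def by (rule space_Plant)
  have spR: "space R = U" unfolding R_def U_def by (rule space_Ref)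
  have setsP: "sets P = sets R" unfolding P_eq R_def by (rule sets_Plant)
  have setsP': "sets P' = sets R" unfolding P'_eq R_def by (rule sets_Plant)
  have Tm: "T \<in> measurable P R"
  proof -
    have "T \<in> measurable (Ref (y*\<eta>) d) R"
      unfolding T_def R_def Ref_def compose_def
      by (rule measurable_restrict) (auto intro!: measurable_compose[OF measurable_component_singleton plus_meas])
    then show ?thesis unfolding P_eq measurable_cong_sets[OF sets_Plant[of y s "y*\<eta>" d "y*\<eta>"] refl] .
  qed
  define Perms where "Perms = {\<pi>. \<pi> permutes {0..d} \<and> (\<forall>i. N \<le> i \<longrightarrow> \<pi> i = i)}"
  have finP: "finite Perms"
    by (rule finite_subset[OF _ finite_permutations[of "{0..d}"]]) (auto simp: Perms_def)
  have idP: "id \<in> Perms" by (simp add: Perms_def permutes_id)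
  have compP: "\<pi>1 \<circ> \<pi>2 \<in> Perms" if "\<pi>1 \<in> Perms" "\<pi>2 \<in> Perms" for \<pi>1 \<pi>2
    using that by (auto simp: Perms_def permutes_compose)
  have swP: "Transposition.transpose 0 k \<in> Perms" if "k < N" for k
    using that Nd N1 by (auto simp: Perms_def Transposition.transpose_def intro!: permutes_swap_id)
  have swsw: "Transposition.transpose 0 k \<circ> Transposition.transpose 0 k = id" for k :: nat
    by (auto simp: Transposition.transpose_def fun_eq_iff)
  have invP: "inv \<pi> \<in> Perms" "\<pi> \<circ> inv \<pi> = id" if "\<pi> \<in> Perms" for \<pi>
  proof -
    have p: "\<pi> permutes {0..d}" and fx: "\<And>i. N \<le> i \<Longrightarrow> \<pi> i = i" using that by (auto simp: Perms_def)
    have "inv \<pi> i = i" if "N \<le> i" for i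
      using permutes_inverses(2)[OF p, of i] fx[OF that] by simp
    then show "inv \<pi> \<in> Perms" using permutes_inv[OF p] by (auto simp: Perms_def)
    show "\<pi> \<circ> inv \<pi> = id" using permutes_inv_o(1)[OF p] .
  qed
  have permU: "x \<circ> \<pi> \<in> U" if "x \<in> U" "\<pi> \<in> Perms" for x \<pi>
    using perm_space[of \<pi> d x] that by (auto simp: Perms_def U_def)
  show ?thesis
    unfolding P_def[symmetric] P'_def[symmetric] \<eta>_def[symmetric]
  proof (rule outer_sum)
    fix A1 A2
    assume A1: "A1 \<in> sets P" and A2: "A2 \<in> sets P'"
      and E1: "{x \<in> space P. \<exists>x'\<in>S_linf d (2*\<eta>) x. f x' \<noteq> y} \<subseteq> A1"
      and E2: "{x \<in> space P'. \<exists>x'\<in>S_RT d N x. f x' \<noteq> -y} \<subseteq> A2"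
    define A where "A = {x \<in> U. \<forall>\<pi>\<in>Perms. x \<circ> \<pi> \<in> A2}"
    have A2R: "A2 \<in> sets R" using A2 setsP' by simp
    have A_eq: "A = U \<inter> (\<Inter>\<pi>\<in>Perms. (\<lambda>x. x \<circ> \<pi>) -` A2 \<inter> space R)"
      unfolding A_def spR by auto
    have AR: "A \<in> sets R"
    proof -
      have "(\<Inter>\<pi>\<in>Perms. (\<lambda>x. x \<circ> \<pi>) -` A2 \<inter> space R) \<in> sets R"
      proof (rule sets.finite_INT[OF finP])
        show "Perms \<noteq> {}" using idP by blast
        fix \<pi> assume "\<pi> \<in> Perms"
        then have "(\<lambda>x. x \<circ> \<pi>) \<in> measurable R R" unfolding R_def by (intro perm_meas) (simp add: Perms_def)
        then show "(\<lambda>x. x \<circ> \<pi>) -` A2 \<inter> space R \<in> sets R" using A2R by (rule measurable_sets)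
      qed
      then show ?thesis unfolding A_eq using sets.top[of R] spR by auto
    qed
    have AsubA2: "A \<subseteq> A2" unfolding A_def using idP by force
    have sym: "(x \<circ> Transposition.transpose 0 k \<in> A \<longleftrightarrow> x \<in> A)" if k: "k < N" and x: "x \<in> space R" for k x
    proof -
      let ?\<sigma> = "Transposition.transpose 0 k"
      have xU: "x \<in> U" using x spR by simp
      show ?thesis
      proof
        assume h: "x \<circ> ?\<sigma> \<in> A"
        have "x \<circ> \<pi> \<in> A2" if "\<pi> \<in> Perms" for \<pi>
        proof -
          have "(x \<circ> ?\<sigma>) \<circ> (?\<sigma> \<circ> \<pi>) \<in> A2" using h compP[OF swP[OF k] that] by (auto simp: A_def)
          moreover have "(x \<circ> ?\<sigma>) \<circ> (?\<sigma> \<circ> \<pi>) = x \<circ> \<pi>" by (simp add: o_assoc[symmetric] swsw) (simp add: o_assoc swsw)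
          ultimately show ?thesis by simp
        qed
        then show "x \<in> A" using xU by (auto simp: A_def)
      next
        assume h: "x \<in> A"
        have "(x \<circ> ?\<sigma>) \<circ> \<pi> \<in> A2" if "\<pi> \<in> Perms" for \<pi>
          using h compP[OF swP[OF k] that] by (auto simp: A_def o_assoc)
        then show "x \<circ> ?\<sigma> \<in> A" using permU[OF xU swP[OF k]] by (auto simp: A_def)
      qed
    qed
    have L2Q: "\<bar>c+y\<bar> \<le> 1 + 2*\<alpha>"
    proof -
      have "\<bar>c+y\<bar> \<le> \<bar>c\<bar> + \<bar>y\<bar>" by (rule abs_triangle_ineq)
      also have "\<bar>c\<bar> = 2*\<eta>" using yabs \<eta>0 by (simp add: c_def abs_mult)
      finally show ?thesis using yabs \<eta>\<alpha> by simp
    qed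
    have L2P': "\<bar>-y\<bar> \<le> 1 + 2*\<alpha>" using yabs af by simp
    have bQ: "\<bar>measure Q A - measure R A\<bar> \<le> \<delta>"
      using planted_bound[OF s0 N1 Nd AR[unfolded R_def] sym[unfolded R_def] \<delta>I[OF L2Q, folded \<eta>_def, folded mm_def, folded s_def]]
        \<delta>[OF L2Q, folded \<eta>_def, folded mm_def, folded s_def]
      unfolding Q_def R_def by linarith
    have bP': "\<bar>measure P' A - measure R A\<bar> \<le> \<delta>"
      using planted_bound[OF s0 N1 Nd AR[unfolded R_def] sym[unfolded R_def] \<delta>I[OF L2P', folded \<eta>_def, folded mm_def, folded s_def]]
        \<delta>[OF L2P', folded \<eta>_def, folded mm_def, folded s_def]
      unfolding P'_eq R_def by linarith
    have inc1: "space P - (T -` A \<inter> space P) \<subseteq> A1"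
    proof
      fix x assume hx: "x \<in> space P - (T -` A \<inter> space P)"
      then have xU: "x \<in> U" and TA: "T x \<notin> A" using spP by auto
      have TU: "T x \<in> U" using xU by (auto simp: T_def U_def compose_def)
      from TA TU obtain \<pi> where \<pi>: "\<pi> \<in> Perms" "T x \<circ> \<pi> \<notin> A2" by (auto simp: A_def)
      have "T x \<circ> \<pi> \<notin> {x \<in> space P'. \<exists>x'\<in>S_RT d N x. f x' \<noteq> -y}" using E2 \<pi>(2) by blast
      moreover have "T x \<circ> \<pi> \<in> space P'" using permU[OF TU \<pi>(1)] spP' by simp
      moreover have "T x \<in> S_RT d N (T x \<circ> \<pi>)"
      proof -
        have "T x = (T x \<circ> \<pi>) \<circ> inv \<pi>" using invP(2)[OF \<pi>(1)] by (simp add: comp_assoc)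
        then show ?thesis using invP(1)[OF \<pi>(1)] unfolding S_RT_def Perms_def by blast
      qed
      ultimately have "f (T x) = -y" by auto
      then have fT: "f (T x) \<noteq> y" using yne by simp
      have "T x \<in> S_linf d (2*\<eta>) x"
      proof -
        have "T x = (\<lambda>i. if i \<le> d then x i + c else undefined)"
          by (auto simp: T_def compose_def fun_eq_iff)
        moreover have "\<forall>i\<in>{0..d}. \<bar>c\<bar> \<le> 2*\<eta>" using yabs \<eta>0 by (simp add: c_def abs_mult)
        ultimately show ?thesis unfolding S_linf_def
          by (intro CollectI exI[of _ "\<lambda>_. c"]) simp
      qed
      then show "x \<in> A1" using E1 fT xU spP by blast
    qed
    have m1: "measure P A1 \<ge> 1 - measure Q A"
    proof -
      interpret PP: prob_space P unfolding P_eq Plant_def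
        by (rule prob_space_PiM) (auto simp: prob_Nm prob_space_normal_density s0)
      have ev: "T -` A \<inter> space P \<in> sets P" using Tm AR by (rule measurable_sets)
      have "measure P (space P - (T -` A \<inter> space P)) \<le> measure P A1"
        using inc1 A1 by (intro PP.finite_measure_mono) auto
      moreover have "measure P (space P - (T -` A \<inter> space P)) = 1 - measure P (T -` A \<inter> space P)"
        using ev by (rule PP.prob_compl)
      moreover have "measure P (T -` A \<inter> space P) = measure Q A"
        unfolding QD[symmetric] using Tm AR by (simp add: measure_distr)
      ultimately show ?thesis by simp
    qed
    have m2: "measure P' A2 \<ge> measure P' A"
    proof -
      interpret PP': prob_space P' unfolding P'_eq Plant_def
        by (rule prob_space_PiM) (auto simp: prob_Nm prob_space_normal_density s0)
      show ?thesis using AsubA2 A2 by (intro PP'.finite_measure_mono) auto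
    qed
    show "1 - 2*\<delta> \<le> measure P A1 + measure P' A2"
      using m1 m2 bQ bP' by linarith
  qed (auto simp: spP spP')
qed

theorem theorem2:
  fixes \<alpha> :: real
  assumes "\<alpha> > 1 / sqrt 2"
  shows "\<exists>C::real. \<forall>(N::nat) (d::nat) (f :: (nat \<Rightarrow> real) \<Rightarrow> real).
           N \<ge> 2 \<longrightarrow> d \<ge> N - 1 \<longrightarrow> (\<forall>x. f x \<in> {-1, 1}) \<longrightarrow>
           avg_adv_risk \<alpha> d f (S_linf d (2 * eta \<alpha> d)) (S_RT d N)
             \<ge> 1/2 - C / sqrt (real N)"
proof (intro exI allI impI)
  fix N d :: nat and f :: "(nat \<Rightarrow> real) \<Rightarrow> real"
  assume N2: "N \<ge> 2" and dN: "d \<ge> N - 1" and f: "\<forall>x. f x \<in> {-1, 1}"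
  note af = alpha_facts[OF assms]
  define \<delta> where "\<delta> = sqrt (Kb \<alpha>) / sqrt (real N)"
  have N1: "1 \<le> N" and Nd: "N \<le> d+1" and d1: "1 \<le> d" using N2 dN by auto
  have \<eta>\<alpha>: "eta \<alpha> d \<le> \<alpha>" and \<eta>0: "eta \<alpha> d \<ge> 0"
  proof -
    have sd: "sqrt (real d) \<ge> 1" using d1 by simp
    have "\<alpha> / sqrt (real d) \<le> \<alpha> / 1" using af sd by (intro divide_left_mono) auto
    then show "eta \<alpha> d \<le> \<alpha>" by (simp add: eta_def)
    show "eta \<alpha> d \<ge> 0" using af by (simp add: eta_def)
  qed
  define O1 where "O1 = (\<lambda>y. outer_prob (cond_law \<alpha> d y) {x \<in> space (cond_law \<alpha> d y). \<exists>x'\<in>S_linf d (2*eta \<alpha> d) x. f x' \<noteq> y})"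
  define O2 where "O2 = (\<lambda>y. outer_prob (cond_law \<alpha> d y) {x \<in> space (cond_law \<alpha> d y). \<exists>x'\<in>S_RT d N x. f x' \<noteq> y})"
  have kp: "1 - 2*\<delta> \<le> O1 y + O2 (-y)" if y: "y \<in> {-1, 1}" for y
  proof -
    have my: "\<bar>-y*eta \<alpha> d\<bar> \<le> \<alpha>" using y \<eta>\<alpha> \<eta>0 by auto
    show ?thesis unfolding O1_def O2_def
    proof (rule key_pair[OF assms N1 Nd d1 y f])
      fix \<mu> :: real assume \<mu>: "\<bar>\<mu>\<bar> \<le> 1 + 2*\<alpha>"
      show "integrable (Nm (-y*eta \<alpha> d)) (\<lambda>t. (Lr \<mu> (1/\<alpha>) (-y*eta \<alpha> d) t)^2)"
        by (rule K_bound(1)[OF assms \<mu> my])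
      have "((\<integral>t. (Lr \<mu> (1/\<alpha>) (-y*eta \<alpha> d) t)^2 \<partial>Nm (-y*eta \<alpha> d)) - 1) / N \<le> Kb \<alpha> / N"
        using K_bound(2)[OF assms \<mu> my] N1 by (intro divide_right_mono) auto
      then have "sqrt (((\<integral>t. (Lr \<mu> (1/\<alpha>) (-y*eta \<alpha> d) t)^2 \<partial>Nm (-y*eta \<alpha> d)) - 1) / N) \<le> sqrt (Kb \<alpha> / N)"
        by (rule real_sqrt_le_mono)
      then show "sqrt (((\<integral>t. (Lr \<mu> (1/\<alpha>) (-y*eta \<alpha> d) t)^2 \<partial>Nm (-y*eta \<alpha> d)) - 1) / N) \<le> \<delta>"
        by (simp add: \<delta>_def real_sqrt_divide)
    qed
  qed
  have k1: "1 - 2*\<delta> \<le> O1 1 + O2 (-1)" using kp[of 1] by simp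
  have k2: "1 - 2*\<delta> \<le> O1 (-1) + O2 1" using kp[of "-1"] by simp
  have eq: "avg_adv_risk \<alpha> d f (S_linf d (2 * eta \<alpha> d)) (S_RT d N) = (O1 (-1) + O1 1 + O2 (-1) + O2 1) / 4"
    unfolding avg_adv_risk_def adv_risk_def O1_def O2_def by simp
  have "1/2 - \<delta> \<le> (O1 (-1) + O1 1 + O2 (-1) + O2 1) / 4"
  proof -
    have "(1 - 2*\<delta>) + (1 - 2*\<delta>) \<le> (O1 1 + O2 (-1)) + (O1 (-1) + O2 1)" by (rule add_mono[OF k1 k2])
    then show ?thesis by (simp add: field_simps)
  qed
  then show "avg_adv_risk \<alpha> d f (S_linf d (2 * eta \<alpha> d)) (S_RT d N) \<ge> 1/2 - sqrt (Kb \<alpha>) / sqrt (real N)"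
    unfolding eq \<delta>_def .
qed

end
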